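(* Let $B$ be a Banach $A$-bimodule, where $A$ has a bounded approximate identity, and suppose $B^*A=B^*$. (1) If every element of $A$ has the $Rw^*w$-property with respect to $A$, then $Z_{B^{**}}(A^{**})=A^{**}$. (2) If every element of $A$ has the $Rw^*w$-property with respect to $B$, then $Z_{A^{**}}(B^{**})=B^{**}$.
   Context: $A$ is a Banach algebra, $B$ a Banach $A$-bimodule with actions $\pi_\ell(a,b)=ab$, $\pi_r(b,a)=ba$. For a bounded bilinear $m:X\times Y\to Z$: $m^*:Z^*\times X\to Y^*$, $\langle m^*(z',x),y\rangle=\langle z',m(x,y)\rangle$; $m^{**}:Y^{**}\times Z^*\to X^*$, $\langle m^{**}(y'',z'),x\rangle=\langle y'',m^*(z',x)\rangle$; $m^{***}:X^{**}\times Y^{**}\to Z^{**}$, $\langle m^{***}(x'',y''),z'\rangle=\langle x'',m^{**}(y'',z')\rangle$. For $b'\in B^*$, $a\in A$: $\langle b'a,b\rangle=\langle b',ab\rangle$; $B^*A=\{b'a:b'\in B^*,a\in A\}$. An element $a\in A$ has the $Rw^*w$-property with respect to $B$ if for every net $(b'_\alpha)\subseteq B^*$, $b'_\alpha a\to0$ weak$^*$ implies $b'_\alpha a\to0$ weakly (in $\sigma(B^*,B^{**})$); "with respect to $A$" means $B=A$ as a bimodule over itself (so $\langle a'a,c\rangle=\langle a',ac\rangle$ for $a'\in A^*$). $Z_{B^{**}}(A^{**})=\{a''\in A^{**}:b''\mapsto\pi_\ell^{***}(a'',b'')$ weak$^*$-to-weak$^*$ continuous$\}$; $Z_{A^{**}}(B^{**})=\{b''\in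 B^{**}:a''\mapsto\pi_r^{***}(b'',a'')$ weak$^*$-to-weak$^*$ continuous$\}$. *)

theory Defs
  imports "HOL-Analysis.Analysis"
begin

text \<open>Duals are taken as spaces of bounded real-linear functionals, \<open>'x \<Rightarrow>\<^sub>L real\<close>.\<close>

text \<open>Weak-star topology on the dual \<open>X\<^sup>*\<close>: \<open>\<sigma>(X\<^sup>*, X)\<close>, the initial topology
  of the evaluations \<open>f \<mapsto> f x\<close>, \<open>x \<in> X\<close>.\<close>
definition weak_star_topology :: "('x::real_normed_vector \<Rightarrow>\<^sub>L real) topology" where
  "weak_star_topology =
     pullback_topology UNIV (\<lambda>f x. blinfun_apply f x) (product_topology (\<lambda>_. euclideanreal) UNIV)"

text \<open>Weak topology on a dual space \<open>X\<^sup>*\<close>: \<open>\<sigma>(X\<^sup>*, X\<^sup>*\<^sup>*)\<close>, the initial topology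
  of all \<open>f \<mapsto> \<phi> f\<close>, \<open>\<phi> \<in> X\<^sup>*\<^sup>*\<close>.\<close>
definition weak_topology_dual :: "('x::real_normed_vector \<Rightarrow>\<^sub>L real) topology" where
  "weak_topology_dual =
     pullback_topology UNIV (\<lambda>f (\<phi>::('x \<Rightarrow>\<^sub>L real) \<Rightarrow>\<^sub>L real). blinfun_apply \<phi> f)
       (product_topology (\<lambda>_. euclideanreal) UNIV)"

definition adj1 :: "('x::real_normed_vector \<Rightarrow> 'y::real_normed_vector \<Rightarrow> 'z::real_normed_vector)
    \<Rightarrow> ('z \<Rightarrow>\<^sub>L real) \<Rightarrow> 'x \<Rightarrow> ('y \<Rightarrow>\<^sub>L real)" where
  "adj1 m z' x = Blinfun (\<lambda>y. blinfun_apply z' (m x y))"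

definition adj2 :: "('x::real_normed_vector \<Rightarrow> 'y::real_normed_vector \<Rightarrow> 'z::real_normed_vector)
    \<Rightarrow> (('y \<Rightarrow>\<^sub>L real) \<Rightarrow>\<^sub>L real) \<Rightarrow> ('z \<Rightarrow>\<^sub>L real) \<Rightarrow> ('x \<Rightarrow>\<^sub>L real)" where
  "adj2 m y'' z' = Blinfun (\<lambda>x. blinfun_apply y'' (adj1 m z' x))"

definition adj3 :: "('x::real_normed_vector \<Rightarrow> 'y::real_normed_vector \<Rightarrow> 'z::real_normed_vector)
    \<Rightarrow> (('x \<Rightarrow>\<^sub>L real) \<Rightarrow>\<^sub>L real) \<Rightarrow> (('y \<Rightarrow>\<^sub>L real) \<Rightarrow>\<^sub>L real) \<Rightarrow> (('z \<Rightarrow>\<^sub>L real) \<Rightarrow>\<^sub>L real)" where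
  "adj3 m x'' y'' = Blinfun (\<lambda>z'. blinfun_apply x'' (adj2 m y'' z'))"

text \<open>A Banach algebra is a type of class \<open>{real_normed_algebra, banach}\<close> (associative,
  not necessarily unital).\<close>
definition banach_bimodule ::
  "('a::real_normed_algebra \<Rightarrow> 'b::banach \<Rightarrow> 'b) \<Rightarrow> ('b \<Rightarrow> 'a \<Rightarrow> 'b) \<Rightarrow> bool" where
  "banach_bimodule lm rm \<longleftrightarrow>
     bounded_bilinear lm \<and> bounded_bilinear rm \<and>
     (\<forall>a c b. lm (a * c) b = lm a (lm c b)) \<and>
     (\<forall>b a c. rm b (a * c) = rm (rm b a) c) \<and>
     (\<forall>a b c. rm (lm a b) c = lm a (rm b c))"

text \<open>Bounded approximate identity, as a bounded net (expressed as a proper filter on \<open>A\<close>,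
  equivalently: the eventually-filter of a net \<open>(e\<^sub>\<alpha>)\<close>) with \<open>e\<^sub>\<alpha> a \<rightarrow> a\<close>, \<open>a e\<^sub>\<alpha> \<rightarrow> a\<close>.\<close>
definition has_bounded_approx_identity :: "'a::real_normed_algebra itself \<Rightarrow> bool" where
  "has_bounded_approx_identity _ \<longleftrightarrow>
     (\<exists>(F::'a filter) K. F \<noteq> bot \<and> (\<forall>\<^sub>F e in F. norm e \<le> K) \<and>
        (\<forall>a. ((\<lambda>e. e * a) \<longlongrightarrow> a) F \<and> ((\<lambda>e. a * e) \<longlongrightarrow> a) F))"

text \<open>The module dual action \<open>\<langle>b'a, b\<rangle> = \<langle>b', ab\<rangle>\<close>, i.e. \<open>b'a = lm\<^sup>*(b',a)\<close>.\<close>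
abbreviation dual_act :: "('a \<Rightarrow> 'b \<Rightarrow> 'b) \<Rightarrow> ('b::real_normed_vector \<Rightarrow>\<^sub>L real) \<Rightarrow> 'a::real_normed_vector \<Rightarrow> ('b \<Rightarrow>\<^sub>L real)" where
  "dual_act lm b' a \<equiv> adj1 lm b' a"

text \<open>Nets are represented by filters on \<open>B\<^sup>*\<close> (the image filter of a net).\<close>
definition Rwsw_property :: "('a::real_normed_vector \<Rightarrow> 'b::real_normed_vector \<Rightarrow> 'b) \<Rightarrow> 'a \<Rightarrow> bool" where
  "Rwsw_property lm a \<longleftrightarrow>
     (\<forall>F::('b \<Rightarrow>\<^sub>L real) filter.
        limitin weak_star_topology (\<lambda>b'. dual_act lm b' a) 0 F \<longrightarrow>
        limitin weak_topology_dual (\<lambda>b'. dual_act lm b' a) 0 F)"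

definition Z_left :: "('a::real_normed_vector \<Rightarrow> 'b::real_normed_vector \<Rightarrow> 'b)
    \<Rightarrow> (('a \<Rightarrow>\<^sub>L real) \<Rightarrow>\<^sub>L real) set" where
  "Z_left lm = {a''. continuous_map weak_star_topology weak_star_topology (\<lambda>b''. adj3 lm a'' b'')}"

definition Z_right :: "('b::real_normed_vector \<Rightarrow> 'a::real_normed_vector \<Rightarrow> 'b)
    \<Rightarrow> (('b \<Rightarrow>\<^sub>L real) \<Rightarrow>\<^sub>L real) set" where
  "Z_right rm = {b''. continuous_map weak_star_topology weak_star_topology (\<lambda>a''. adj3 rm b'' a'')}"

end

theory Submission imports Defs begin

lemma adj1_apply:
  assumes "bounded_bilinear m"
  shows "blinfun_apply (adj1 m z' x) y = blinfun_apply z' (m x y)"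
proof -
  have "bounded_linear (\<lambda>y. blinfun_apply z' (m x y))"
    by (rule bounded_linear_compose[OF blinfun.bounded_linear_right bounded_bilinear.bounded_linear_right[OF assms]])
  then show ?thesis unfolding adj1_def by (simp add: bounded_linear_Blinfun_apply)
qed

lemma adj1_bb:
  assumes bb: "bounded_bilinear m"
  shows "bounded_bilinear (adj1 m)"
proof (rule bounded_bilinear.intro)
  fix a a' b
  show "adj1 m (a + a') b = adj1 m a b + adj1 m a' b"
    by (rule blinfun_eqI) (simp add: adj1_apply[OF bb] blinfun.add_left)
next
  fix a b b'
  show "adj1 m a (b + b') = adj1 m a b + adj1 m a b'"
    by (rule blinfun_eqI) (simp add: adj1_apply[OF bb] bounded_bilinear.add_left[OF bb] blinfun.add_right blinfun.add_left)
next
  fix r a b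
  show "adj1 m (r *\<^sub>R a) b = r *\<^sub>R adj1 m a b"
    by (rule blinfun_eqI) (simp add: adj1_apply[OF bb] blinfun.scaleR_left)
next
  fix r a b
  show "adj1 m a (r *\<^sub>R b) = r *\<^sub>R adj1 m a b"
    by (rule blinfun_eqI) (simp add: adj1_apply[OF bb] bounded_bilinear.scaleR_left[OF bb] blinfun.scaleR_right blinfun.scaleR_left)
next
  obtain K where K: "K > 0" "\<And>a b. norm (m a b) \<le> norm a * norm b * K"
    using bounded_bilinear.pos_bounded[OF bb] by blast
  show "\<exists>K. \<forall>a b. norm (adj1 m a b) \<le> norm a * norm b * K"
  proof (intro exI allI)
    fix a b
    show "norm (adj1 m a b) \<le> norm a * norm b * K"
    proof (rule norm_blinfun_bound)
      show "0 \<le> norm a * norm b * K" using K by simp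
      fix y
      have "norm (blinfun_apply (adj1 m a b) y) \<le> norm a * norm (m b y)"
        by (metis adj1_apply[OF bb] norm_blinfun)
      also have "\<dots> \<le> norm a * (norm b * norm y * K)"
        by (rule mult_left_mono[OF K(2)]) simp
      finally show "norm (blinfun_apply (adj1 m a b) y) \<le> norm a * norm b * K * norm y"
        by (simp add: ac_simps)
    qed
  qed
qed

lemma adj2_eq: "adj2 m = adj1 (adj1 m)"
  by (intro ext) (simp add: adj2_def adj1_def)
lemma adj3_eq: "adj3 m = adj1 (adj2 m)"
  by (intro ext) (simp add: adj3_def adj1_def)

lemma adj2_apply: "bounded_bilinear m \<Longrightarrow> blinfun_apply (adj2 m y'' z') x = blinfun_apply y'' (adj1 m z' x)"
  by (simp add: adj2_eq adj1_apply adj1_bb)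
lemma adj3_apply: "bounded_bilinear m \<Longrightarrow> blinfun_apply (adj3 m x'' y'') z' = blinfun_apply x'' (adj2 m y'' z')"
  by (simp add: adj3_eq adj2_eq adj1_apply adj1_bb)

lemma limitin_pullback_prod:
  "limitin (pullback_topology UNIV f (product_topology (\<lambda>_. euclideanreal) UNIV)) g l F
    \<longleftrightarrow> (\<forall>i. ((\<lambda>p. f (g p) i) \<longlongrightarrow> f l i) F)"
proof -
  have "limitin (pullback_topology UNIV f T) g l F \<longleftrightarrow> limitin T (f \<circ> g) (f l) F" for T
    unfolding limitin_def openin_pullback_topology topspace_pullback_topology by auto
  then show ?thesis
    by (simp add: limitin_componentwise)
qed

lemma ws_limit: "limitin weak_star_topology g l F \<longleftrightarrow> (\<forall>x. ((\<lambda>p. blinfun_apply (g p) x) \<longlongrightarrow> blinfun_apply l x) F)"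
  unfolding weak_star_topology_def limitin_pullback_prod by simp
lemma wd_limit: "limitin weak_topology_dual g l F \<longleftrightarrow> (\<forall>\<phi>::_ \<Rightarrow>\<^sub>L real. ((\<lambda>p. blinfun_apply \<phi> (g p)) \<longlongrightarrow> blinfun_apply \<phi> l) F)"
  unfolding weak_topology_dual_def limitin_pullback_prod by auto
lemma ws_top: "topspace weak_star_topology = UNIV"
  unfolding weak_star_topology_def topspace_pullback_topology by simp

lemma ws_cont:
  assumes "\<And>x z. ((\<lambda>p. blinfun_apply (f p) z) \<longlongrightarrow> blinfun_apply (f x) z) (atin weak_star_topology x)"
  shows "continuous_map weak_star_topology weak_star_topology f"
  unfolding continuous_map_atin ws_top using assms by (simp add: ws_limit)

lemma ws_id: "((\<lambda>p. blinfun_apply p w) \<longlongrightarrow> blinfun_apply x w) (atin weak_star_topology x)"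
proof -
  have "limitin weak_star_topology (\<lambda>p. p) x (atin weak_star_topology x)"
    using continuous_map_id[of weak_star_topology] unfolding continuous_map_atin ws_top id_def by blast
  then show ?thesis by (simp add: ws_limit)
qed

lemma part1:
  fixes lm :: "'a::{real_normed_algebra, banach} \<Rightarrow> 'b::banach \<Rightarrow> 'b"
  assumes bblm: "bounded_bilinear lm"
    and assoc: "\<And>a c b. lm (a * c) b = lm a (lm c b)"
    and fact: "{dual_act lm b' a | b' a. True} = UNIV"
    and H: "\<forall>a::'a. Rwsw_property ((*) :: 'a \<Rightarrow> 'a \<Rightarrow> 'a) a"
  shows "Z_left lm = UNIV"
proof -
  have bbm: "bounded_bilinear ((*) :: 'a \<Rightarrow> 'a \<Rightarrow> 'a)" by (rule bounded_bilinear_mult)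
  have "continuous_map weak_star_topology weak_star_topology (\<lambda>b''. adj3 lm a'' b'')" for a''
  proof (rule ws_cont)
    fix x z
    obtain b' a where z: "z = dual_act lm b' a" using fact by blast
    define G where "G p = adj2 lm p b'" for p
    have adj1_eq_lemma: "adj1 lm (adj1 lm b' a) c = adj1 lm b' (a * c)" for c
      by (rule blinfun_eqI) (simp add: adj1_apply[OF bblm] assoc)
    have key: "adj2 lm p z = adj1 (*) (G p) a" for p
      unfolding z G_def
      by (rule blinfun_eqI) (simp add: adj2_apply[OF bblm] adj1_apply[OF bbm] adj1_apply[OF bblm] assoc
            adj1_eq_lemma)
    show "((\<lambda>p. blinfun_apply (adj3 lm a'' p) z) \<longlongrightarrow> blinfun_apply (adj3 lm a'' x) z) (atin weak_star_topology x)"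
    proof -
      let ?F = "filtermap (\<lambda>p. G p - G x) (atin weak_star_topology x)"
      have "limitin weak_star_topology (\<lambda>b'. dual_act (*) b' a) 0 ?F"
        unfolding ws_limit
      proof
        fix c
        have "((\<lambda>p. blinfun_apply p (adj1 lm b' (a * c)) - blinfun_apply x (adj1 lm b' (a * c))) \<longlongrightarrow> 0)
               (atin weak_star_topology x)"
          using ws_id LIM_zero by blast
        then show "((\<lambda>p. blinfun_apply (dual_act (*) p a) c) \<longlongrightarrow> blinfun_apply 0 c) ?F"
          unfolding filterlim_filtermap
          by (simp add: adj1_apply[OF bbm] G_def adj2_apply[OF bblm] blinfun.diff_left)
      qed
      with H have "limitin weak_topology_dual (\<lambda>b'. dual_act (*) b' a) 0 ?F"
        unfolding Rwsw_property_def by blast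
      then have "((\<lambda>p. blinfun_apply a'' (dual_act (*) (G p - G x) a)) \<longlongrightarrow> 0) (atin weak_star_topology x)"
        unfolding wd_limit filterlim_filtermap by (metis blinfun.zero_right)
      then have "((\<lambda>p. blinfun_apply a'' (dual_act (*) (G p) a) - blinfun_apply a'' (dual_act (*) (G x) a)) \<longlongrightarrow> 0) (atin weak_star_topology x)"
        by (simp add: bounded_bilinear.diff_left[OF adj1_bb[OF bbm]] blinfun.diff_right)
      then show ?thesis
        by (simp add: adj3_apply[OF bblm] key LIM_zero_iff)
    qed
  qed
  then show ?thesis unfolding Z_left_def by auto
qed

lemma part2:
  fixes lm :: "'a::{real_normed_algebra, banach} \<Rightarrow> 'b::banach \<Rightarrow> 'b"
    and rm :: "'b \<Rightarrow> 'a \<Rightarrow> 'b"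
  assumes bblm: "bounded_bilinear lm" and bbrm: "bounded_bilinear rm"
    and mix: "\<And>a b c. rm (lm a b) c = lm a (rm b c)"
    and fact: "{dual_act lm b' a | b' a. True} = UNIV"
    and H: "\<forall>a::'a. Rwsw_property lm a"
  shows "Z_right rm = UNIV"
proof -
  have "continuous_map weak_star_topology weak_star_topology (\<lambda>a''. adj3 rm b'' a'')" for b''
  proof (rule ws_cont)
    fix x z
    obtain b' a where z: "z = dual_act lm b' a" using fact by blast
    define G where "G p = adj2 rm p b'" for p
    have adj1_eq_lemma: "adj1 rm (adj1 lm b' a) c = adj1 rm b' (lm a c)" for c
      by (rule blinfun_eqI) (simp add: adj1_apply[OF bblm] adj1_apply[OF bbrm] mix)
    have key: "adj2 rm p z = adj1 lm (G p) a" for p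
      unfolding z G_def
      by (rule blinfun_eqI) (simp add: adj2_apply[OF bbrm] adj1_apply[OF bblm] adj1_eq_lemma)
    show "((\<lambda>p. blinfun_apply (adj3 rm b'' p) z) \<longlongrightarrow> blinfun_apply (adj3 rm b'' x) z) (atin weak_star_topology x)"
    proof -
      let ?F = "filtermap (\<lambda>p. G p - G x) (atin weak_star_topology x)"
      have "limitin weak_star_topology (\<lambda>b'. dual_act lm b' a) 0 ?F"
        unfolding ws_limit
      proof
        fix c
        have "((\<lambda>p. blinfun_apply p (adj1 rm b' (lm a c)) - blinfun_apply x (adj1 rm b' (lm a c))) \<longlongrightarrow> 0)
               (atin weak_star_topology x)"
          using ws_id LIM_zero by blast
        then show "((\<lambda>p. blinfun_apply (dual_act lm p a) c) \<longlongrightarrow> blinfun_apply 0 c) ?F"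
          unfolding filterlim_filtermap
          by (simp add: adj1_apply[OF bblm] G_def adj2_apply[OF bbrm] blinfun.diff_left)
      qed
      with H have "limitin weak_topology_dual (\<lambda>b'. dual_act lm b' a) 0 ?F"
        unfolding Rwsw_property_def by blast
      then have "((\<lambda>p. blinfun_apply b'' (dual_act lm (G p - G x) a)) \<longlongrightarrow> 0) (atin weak_star_topology x)"
        unfolding wd_limit filterlim_filtermap by (metis blinfun.zero_right)
      then have "((\<lambda>p. blinfun_apply b'' (dual_act lm (G p) a) - blinfun_apply b'' (dual_act lm (G x) a)) \<longlongrightarrow> 0) (atin weak_star_topology x)"
        by (simp add: bounded_bilinear.diff_left[OF adj1_bb[OF bblm]] blinfun.diff_right)
      then show ?thesis
        by (simp add: adj3_apply[OF bbrm] key LIM_zero_iff)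
    qed
  qed
  then show ?thesis unfolding Z_right_def by auto
qed

theorem mainTheorem7:
  fixes lm :: "'a::{real_normed_algebra, banach} \<Rightarrow> 'b::banach \<Rightarrow> 'b"
    and rm :: "'b \<Rightarrow> 'a \<Rightarrow> 'b"
  assumes bimod: "banach_bimodule lm rm"
    and bai: "has_bounded_approx_identity TYPE('a)"
    and fact: "{dual_act lm b' a | b' a. True} = UNIV"
  shows "((\<forall>a::'a. Rwsw_property ((*) :: 'a \<Rightarrow> 'a \<Rightarrow> 'a) a) \<longrightarrow> Z_left lm = UNIV)
       \<and> ((\<forall>a::'a. Rwsw_property lm a) \<longrightarrow> Z_right rm = UNIV)"
  using part1[of lm] part2[of lm rm] bimod fact unfolding banach_bimodule_def by blast

end
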